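(* For integers $1\le N\le 50$, a $PCS_6^N$ exists if and only if $N=1$ or $N$ is even.
   Context: A binary sequence of length $N$ is a sequence $a=(a(0),\dots,a(N-1))$ with each $a(i)\in\{+1,-1\}$. Its periodic autocorrelation function is $\tilde\varphi_a(i)=\sum_{j=0}^{N-1}a(j)a(i+j \bmod N)$ for $0\le i<N$. A family $a_1,\dots,a_p$ of binary sequences, all of length $N$, is a $PCS_p^N$ (periodic complementary set) if $\sum_{k=1}^p\tilde\varphi_{a_k}(i)=0$ for all $0<i<N$. The sequences in a family need not be distinct. *)

theory Defs
  imports Main
begin

text \<open>A binary sequence of length N: a function on indices 0..N-1 with values +1/-1
  (values outside the index range are irrelevant).\<close>
definition binary_seq :: "nat \<Rightarrow> (nat \<Rightarrow> int) \<Rightarrow> bool" where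
  "binary_seq N a \<longleftrightarrow> (\<forall>j<N. a j = 1 \<or> a j = -1)"

definition per_autocorr :: "nat \<Rightarrow> (nat \<Rightarrow> int) \<Rightarrow> nat \<Rightarrow> int" where
  "per_autocorr N a i = (\<Sum>j<N. a j * a ((i + j) mod N))"

text \<open>A family a_1..a_p (indexed here by k < p) is a PCS_p^N.\<close>
definition is_PCS :: "nat \<Rightarrow> nat \<Rightarrow> (nat \<Rightarrow> nat \<Rightarrow> int) \<Rightarrow> bool" where
  "is_PCS p N A \<longleftrightarrow> (\<forall>k<p. binary_seq N (A k)) \<and>
     (\<forall>i. 0 < i \<and> i < N \<longrightarrow> (\<Sum>k<p. per_autocorr N (A k) i) = 0)"

definition PCS_exists :: "nat \<Rightarrow> nat \<Rightarrow> bool" where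
  "PCS_exists p N \<longleftrightarrow> (\<exists>A. is_PCS p N A)"

end

theory Submission
  imports Defs "HOL-Number_Theory.Cong"
begin

lemma reindex_mod:
  fixes f :: "nat \<Rightarrow> int"
  assumes "0 < N"
  shows "(\<Sum>j<N. f ((i + j) mod N)) = (\<Sum>j<N. f j)"
proof -
  let ?g = "\<lambda>j. (i + j) mod N"
  have inj: "inj_on ?g {..<N}"
  proof (rule inj_onI)
    fix x y assume x: "x \<in> {..<N}" and y: "y \<in> {..<N}" and e: "(i + x) mod N = (i + y) mod N"
    have "x mod N = y mod N" using e cong_add_lcancel_nat[of i x y N] unfolding cong_def by blast
    then show "x = y" using x y by simp
  qed
  have im: "?g ` {..<N} = {..<N}"
    by (rule endo_inj_surj) (use inj assms in auto)
  have "(\<Sum>j<N. f ((i + j) mod N)) = sum f (?g ` {..<N})"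
    by (simp add: sum.reindex[OF inj])
  then show ?thesis using im by simp
qed

lemma autocorr_mod4:
  assumes "binary_seq N a" "0 < N"
  shows "(4::int) dvd (per_autocorr N a i - int N)"
proof -
  define b where "b j = (a j + 1) div 2" for j
  have ab: "a j = 2 * b j - 1" if "j < N" for j
    using assms(1) that unfolding binary_seq_def b_def by auto
  have "per_autocorr N a i = (\<Sum>j<N. (2 * b j - 1) * (2 * b ((i + j) mod N) - 1))"
    unfolding per_autocorr_def using ab assms(2) by (intro sum.cong) auto
  also have "\<dots> = (\<Sum>j<N. 4 * (b j * b ((i + j) mod N)) - 2 * b j - 2 * b ((i + j) mod N) + 1)"
    by (intro sum.cong) (auto simp: algebra_simps)
  also have "\<dots> = 4 * (\<Sum>j<N. b j * b ((i + j) mod N)) - 2 * (\<Sum>j<N. b j) - 2 * (\<Sum>j<N. b ((i + j) mod N)) + int N"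
    by (simp add: sum.distrib sum_subtractf sum_distrib_left)
  also have "\<dots> = 4 * ((\<Sum>j<N. b j * b ((i + j) mod N)) - (\<Sum>j<N. b j)) + int N"
    using reindex_mod[OF assms(2), of b i] by simp
  finally show ?thesis by simp
qed

lemma no_odd:
  assumes "odd N" "2 \<le> N"
  shows "\<not> is_PCS 6 N A"
proof
  assume P: "is_PCS 6 N A"
  have z: "(\<Sum>k<6. per_autocorr N (A k) 1) = 0" using P assms unfolding is_PCS_def by auto
  have "(4::int) dvd (\<Sum>k<(6::nat). (per_autocorr N (A k) 1 - int N))"
    using P assms by (intro dvd_sum autocorr_mod4) (auto simp: is_PCS_def)
  then have "(4::int) dvd (0 - 6 * int N)" using z by (simp add: sum_subtractf)
  then obtain k where k: "0 - 6 * int N = 4 * k" by (elim dvdE)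
  then have "int (3 * N) = 2 * (- k)" by simp
  then have "even (int (3 * N))" by (rule dvdI)
  then have "even (3 * N)" by simp
  then show False using assms(1) by simp
qed
definition conv :: "string \<Rightarrow> int list" where
  "conv s = map (\<lambda>c. if c = CHR ''+'' then 1 else -1) s"

definition acl :: "int list \<Rightarrow> nat \<Rightarrow> int" where
  "acl s i = sum_list (map2 (*) s (drop i s @ take i s))"

definition ok :: "nat \<Rightarrow> string list \<Rightarrow> bool" where
  "ok N L \<longleftrightarrow> length L = 6 \<and> list_all (\<lambda>s. length s = N) L \<and>
     list_all (\<lambda>i. sum_list (map (\<lambda>s. acl (conv s) i) L) = 0) [1..<N]"

lemma acl_eq: "length s = N \<Longrightarrow> i < N \<Longrightarrow> acl s i = (\<Sum>j<N. s ! j * s ! ((i + j) mod N))"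
proof -
  assume a: "length s = N" "i < N"
  have "drop i s @ take i s = rotate i s" using rotate_drop_take[of i s] a by simp
  then show ?thesis unfolding acl_def using a
    by (simp add: sum_list_sum_nth lessThan_atLeast0 nth_rotate add.commute)
qed

lemma ok_PCS:
  assumes "ok N L"
  shows "PCS_exists 6 N"
proof -
  define A where "A k = (\<lambda>j. conv (L ! k) ! j)" for k
  have len: "length L = 6" and lens: "\<And>k. k < 6 \<Longrightarrow> length (L ! k) = N"
    using assms by (auto simp: ok_def list_all_length)
  have bin: "binary_seq N (A k)" if "k < 6" for k
    using lens[OF that] by (auto simp: binary_seq_def A_def conv_def)
  have pa: "per_autocorr N (A k) i = acl (conv (L ! k)) i" if "k < 6" "i < N" for k i
    unfolding per_autocorr_def A_def
    using acl_eq[of "conv (L ! k)" N i] lens[OF that(1)] that(2) by (simp add: conv_def)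
  have "(\<Sum>k<6. per_autocorr N (A k) i) = 0" if "0 < i" "i < N" for i
  proof -
    have "sum_list (map (\<lambda>s. acl (conv s) i) L) = 0"
      using assms that by (auto simp: ok_def list_all_iff)
    moreover have "(\<Sum>k<6. per_autocorr N (A k) i) = (\<Sum>k<6. acl (conv (L ! k)) i)"
      by (rule sum.cong) (auto simp: pa that)
    ultimately show ?thesis
      by (simp add: sum_list_sum_nth len lessThan_atLeast0)
  qed
  then have "is_PCS 6 N A" using bin by (auto simp: is_PCS_def)
  then show ?thesis unfolding PCS_exists_def by blast
qed

lemma ok2: "ok 2 [''--'', ''+-'', ''--'', ''--'', ''-+'', ''+-'']"
  by code_simp

lemma ok4: "ok 4 [''--+-'', ''----'', ''-++-'', ''-+-+'', ''-++-'', ''-+--'']"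
  by code_simp

lemma ok6: "ok 6 [''--+---'', ''---+++'', ''++-+++'', ''+-++--'', ''-+---+'', ''++-+--'']"
  by code_simp

lemma ok8: "ok 8 [''--+-----'', ''-+--++-+'', ''-++--+--'', ''-+---+++'', ''-+----++'', ''++++-+--'']"
  by code_simp

lemma ok10: "ok 10 [''-++------+'', ''-++++--++-'', ''-+---+---+'', ''++-+--++++'', ''+++--+----'', ''-+-+--+--+'']"
  by code_simp

lemma ok12: "ok 12 [''--++--------'', ''++-+--+--+-+'', ''+++--+---++-'', ''+-+-+++----+'', ''+--+---+++--'', ''+-++++--+-+-'']"
  by code_simp

lemma ok14: "ok 14 [''---+--+++-++-+'', ''-++++--++-+++-'', ''-++-+---++----'', ''++-+-++--++++-'', ''++-+--+----+++'', ''-+-+-+-------+'']"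
  by code_simp

lemma ok16: "ok 16 [''+--++--+--+-+-+-'', ''--+++++------+--'', ''-++-+++++-++++--'', ''++---+-+++++-+++'', ''+-+-+--+--+++--+'', ''+++--++--+-++-+-'']"
  by code_simp

lemma ok18: "ok 18 [''+++++-++--++----+-'', ''--++-+---+++-+-+--'', ''-++++++-+++-++-+-+'', ''--+-++-+--+---+++-'', ''-++----++++++++-+-'', ''-+++--+-++-+++-++-'']"
  by code_simp

lemma ok20: "ok 20 [''++--+---++++-+++++--'', ''++-+-++-+-++++---+-+'', ''--+-+-+--+++--+++---'', ''----++-++-------+--+'', ''--+-++++++--+-+-+-++'', ''--+--+--+----+++-+++'']"
  by code_simp

lemma ok22: "ok 22 [''++-+++++-+++-+++--+-++'', ''+++----+-+----++-+-+--'', ''-+---+---++++--+-+--++'', ''----++-+-+-++-++--+-+-'', ''-+++-++---++--+-----++'', ''++++-+-----+--++----++'']"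
  by code_simp

lemma ok24: "ok 24 [''-+++-----+--+-+++--+-+-+'', ''++--++-++--++++-+--++--+'', ''+++++--+++++++-++++----+'', ''-+-----++--++-+-++---++-'', ''--+-++++++++----+--+-+-+'', ''++-+-+++-+-+-+--+--+--++'']"
  by code_simp

lemma ok26: "ok 26 [''-+-+----++++--+++++-++----'', ''-+-+-+---+-+--+-++++++--+-'', ''--++++++++-+-++++-++---+++'', ''---++-+++-+++--+--+-+++-+-'', ''++-----+-+-+-++---++-++---'', ''--++--+-+----+--++-++--+--'']"
  by code_simp

lemma ok28: "ok 28 [''++-+--+++-+-++++--+---+++-+-'', ''-+-+++-+---+-++---+-+++-++--'', ''++--+--------+--++---+++-++-'', ''---++++---+---+---+++-+-++--'', ''+--+-+--+----+++++++-+-++---'', ''-+--+-+--+---+++----+-----+-'']"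
  by code_simp

lemma ok30: "ok 30 [''---+----+-+-++---+++++++-++--+'', ''-+--+--+--+--++++++++---++-+-+'', ''-+---+++++-+-++++---+-+++-++-+'', ''+--+--+-++++++--+++-+++-+-++++'', ''++-+++--++----+++--+--++---+++'', ''-++-+--+-+++-+++---+++-++-++-+'']"
  by code_simp

lemma ok32: "ok 32 [''-++++-++-+-+++-+--+--+-----++--+'', ''+---++--++-+-+++--------+-+-+++-'', ''----++++-----++-++-+-+---++----+'', ''------+--+---+---+-++-+--+++-+--'', ''-+-+-+++++---+++---++--++--++-+-'', ''+-++++-+-+--++---++-++-++++++---'']"
  by code_simp

lemma ok34: "ok 34 [''-+--+--+++--+++-+++-+--++-++-++--+'', ''--++-+++-++-+-++-----+---+---+-++-'', ''---++-+-+----+-+++++--++-++++-++++'', ''++-----+++---+++--------+++++-+---'', ''-++-+--++-+-+-++-+++++++++--+-+-++'', ''--++++-+-+-+-+--+++++----+---++--+'']"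
  by code_simp

lemma ok36: "ok 36 [''+-+-+++++--++-+----+++++---+---++---'', ''+++++-+-++--++++-+--+-+--+---+--++-+'', ''--+-+++-+++++--++-+-++--+-+--+++-++-'', ''-++++-+++-+-++--+++++--+++++--+---++'', ''--++++-+-----++-+++++-+++++++--+++--'', ''-++-+----+-+--+++-+-+++-+-+-++--+--+'']"
  by code_simp

lemma ok38: "ok 38 [''--+---+-+--+-++++--+-+++-+++--+---+-++'', ''-+++-+-+++-++++++-+-++---++--+++++++--'', ''+---+-++-+++++---++++++-++-+--------+-'', ''+++-+-++++-++-----+-+-++++-+--+--++--+'', ''---+-+-+--++-+++--++--+--+-+-+++---++-'', ''+-++--++++--+--+++-++-+--+-+++++---+++'']"
  by code_simp

lemma ok40: "ok 40 [''++++---++--+-+--+++-++++-++++-+-+-++---+'', ''+-+--+--++-----++-+++-+---+-+++++++--+--'', ''----+---++-++--+-++-+-+-----+-+-++-----+'', ''-+-+++-++---++----++++++-+-++++++--+-+--'', ''----++--+-+++-+-+++-----+--+++-++--+++++'', ''-+-++--++++-+++++-++-+-+++--+---++--+-+-'']"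
  by code_simp

lemma ok42: "ok 42 [''-----+-+---+--+---+-+++---+-+-++-+++----++'', ''++++-+-++-+++---+-++-++-++++---++-+++-----'', ''++---+-++++-+++--+-++----+-+--+----+--+++-'', ''-+---+--+-++++--+--++++--+-----+-+++-++++-'', ''-++++-++-++-+++-----+---+++-+++++-++-+++++'', ''-+-+---++---++-+-+-+-+----+-++--++-+++++--'']"
  by code_simp

lemma ok44: "ok 44 [''++++-++-+-+-+-++--+++-+---+-++++---++--++-+-'', ''+-+---+++++++++--++-++++-++++-+--+--++--++++'', ''--+------+++---+--+++-++++---+++--+--+--+++-'', ''-+++-+-+--+--+---++-+++-+--+--+--+++---++-++'', ''-+++++++--+++-------+-++----++-+--------++++'', ''--+-+-+--++-++-+-+-++++--+-++----+-+-+-++-+-'']"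
  by code_simp

lemma ok46: "ok 46 [''+-+---+---+---++-+++------++---+++--+-++--+--+'', ''-+--+-+-+-++---++-+++++-+-+---+-+-++----+--+--'', ''+-++++-+----+++--+++----+-+-+++++--+-+---+-++-'', ''+-++-----++-+++---+--+---+----+---+++-+-++-+--'', ''++++---+++-+++--++-++------+--+-+-+++++++-++-+'', ''++++++----++-+-----+-----+++--+--+--+--++---+-'']"
  by code_simp

lemma ok48: "ok 48 [''-++++-+--+-+---+-++----+++-++++-++----++-++---++'', ''--+-++++-----+----++-+--+---+-+++--+-++---++-++-'', ''+-+++-+-+-----+++++-+-+++++--++-+++++------+-++-'', ''+++-++++++-+-++-+-+++++-+-++--+++-+-++-+-+----++'', ''-+-++--++-+++++++-+++-++---+----++----++--+--+++'', ''----++--+++-+-+-+++-+++--+---+-++--+-++--+++--+-'']"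
  by code_simp

lemma ok50: "ok 50 [''+++-++--++-+-++-+-+++-+--------++--+++-++--+-+++--'', ''-+--++-++--++----++++++--++-++++++---+++--++-+-+-+'', ''-+-++++--+-----+---+-------+--+---++++---+--+-+--+'', ''+-------+++++++-+---++--+-++-++--++++-++++-+--+-++'', ''----++--++++-+-++-------+-++-+-+++-+-+-++-++--+-++'', ''+-+--++++-+-+--+-+-+---+--++----++-+---+++---+++++'']"
  by code_simp


lemma exists_even:
  assumes "even N" "2 \<le> N" "N \<le> 50"
  shows "PCS_exists 6 N"
proof -
  obtain m where m: "N = 2 * m" using assms(1) by (elim evenE)
  have "m \<in> set [1..<26]" using m assms(2,3) by auto
  then have "N \<in> set (map (\<lambda>m. 2 * m) [1..<26])" using m by auto
  then have "N \<in> {2,4,6,8,10,12,14,16,18,20,22,24,26,28,30,32,34,36,38,40,42,44,46,48,50}"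
    by (simp add: upt_rec)
  then show ?thesis using ok_PCS[OF ok2] ok_PCS[OF ok4] ok_PCS[OF ok6] ok_PCS[OF ok8] ok_PCS[OF ok10] ok_PCS[OF ok12] ok_PCS[OF ok14] ok_PCS[OF ok16] ok_PCS[OF ok18] ok_PCS[OF ok20] ok_PCS[OF ok22] ok_PCS[OF ok24] ok_PCS[OF ok26] ok_PCS[OF ok28] ok_PCS[OF ok30] ok_PCS[OF ok32] ok_PCS[OF ok34] ok_PCS[OF ok36] ok_PCS[OF ok38] ok_PCS[OF ok40] ok_PCS[OF ok42] ok_PCS[OF ok44] ok_PCS[OF ok46] ok_PCS[OF ok48] ok_PCS[OF ok50] by auto
qed

theorem proposition5:
  fixes N :: nat
  assumes "1 \<le> N" and "N \<le> 50"
  shows "PCS_exists 6 N \<longleftrightarrow> (N = 1 \<or> even N)"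
proof
  assume P: "PCS_exists 6 N"
  show "N = 1 \<or> even N"
  proof (rule ccontr)
    assume "\<not> (N = 1 \<or> even N)"
    then have "odd N" "2 \<le> N" using assms by auto
    then show False using P no_odd unfolding PCS_exists_def by blast
  qed
next
  assume "N = 1 \<or> even N"
  then show "PCS_exists 6 N"
  proof
    assume "N = 1"
    have "is_PCS 6 1 (\<lambda>k j. 1)" by (auto simp: is_PCS_def binary_seq_def)
    then show ?thesis using \<open>N = 1\<close> unfolding PCS_exists_def by blast
  next
    assume "even N"
    have "N \<noteq> 1" using \<open>even N\<close> by auto
    then have "2 \<le> N" using assms(1) by linarith
    then show ?thesis using exists_even \<open>even N\<close> assms by blast
  qed
qed

end
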